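(* For every $n \geq 2$, $n-1$ divides $d_{n1}$.
   Context: A linear arrangement of $\{1,\ldots,n\}$ is a sequence $a_1\cdots a_n$ in which each of $1,\ldots,n$ appears exactly once. It contains the pattern $ij$ if $a_t=i$ and $a_{t+1}=j$ for some $t$; otherwise it avoids it. $d_{n1}$ is the number of linear arrangements of $\{1,\ldots,n\}$ that avoid all of the patterns $12, 23, \ldots, (n-1)n$ and contain the pattern $n1$. *)

theory Defs
  imports Main
begin

definition linear_arrangements :: "nat \<Rightarrow> nat list set" where
  "linear_arrangements n = {xs. distinct xs \<and> set xs = {1..n}}"

definition contains_pattern :: "nat list \<Rightarrow> nat \<Rightarrow> nat \<Rightarrow> bool" where
  "contains_pattern xs i j \<longleftrightarrow> (\<exists>t. Suc t < length xs \<and> xs ! t = i \<and> xs ! Suc t = j)"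

definition d_n1 :: "nat \<Rightarrow> nat" where
  "d_n1 n = card {xs \<in> linear_arrangements n.
      (\<forall>i. 1 \<le> i \<and> i < n \<longrightarrow> \<not> contains_pattern xs i (i + 1)) \<and> contains_pattern xs n 1}"

end

theory Submission
  imports Defs
begin

definition adjs :: "'a list \<Rightarrow> ('a \<times> 'a) list" where
  "adjs xs = zip xs (tl xs)"

lemma adjs_simps[simp]: "adjs [] = []" "adjs [x] = []" "adjs (x#y#zs) = (x,y) # adjs (y#zs)"
  by (simp_all add: adjs_def)

lemma contains_adjs: "contains_pattern xs i j \<longleftrightarrow> (i,j) \<in> set (adjs xs)"
proof (induction xs rule: induct_list012)
  case 1 then show ?case by (simp add: contains_pattern_def)
next
  case (2 x) then show ?case by (simp add: contains_pattern_def)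
next
  case (3 x y zs)
  have "contains_pattern (x#y#zs) i j \<longleftrightarrow> (x = i \<and> y = j) \<or> contains_pattern (y#zs) i j"
    unfolding contains_pattern_def
    apply (rule iffI)
     apply (elim exE, case_tac t, auto)
    done
  then show ?case using 3 by auto
qed

lemma adjs_subset: "(a,b) \<in> set (adjs xs) \<Longrightarrow> a \<in> set xs \<and> b \<in> set xs"
  by (induction xs rule: induct_list012) auto

lemma adjs_map: "adjs (map f xs) = map (map_prod f f) (adjs xs)"
  by (induction xs rule: induct_list012) auto

fun ex :: "nat \<Rightarrow> nat list \<Rightarrow> nat list" where
  "ex n [] = []"
| "ex n (x#xs) = (if x = 1 then n # 1 # ex n xs else x # ex n xs)"

definition hh :: "nat \<Rightarrow> nat \<Rightarrow> nat" where "hh n b = (if b = 1 then n else b)"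

lemma ex_set: "set (ex n ys) = set ys \<union> (if 1 \<in> set ys then {n} else {})"
  by (induction ys) auto

lemma ex_distinct: "distinct ys \<Longrightarrow> n \<notin> set ys \<Longrightarrow> distinct (ex n ys)"
  by (induction ys) (auto simp: ex_set)

lemma ex_filter: "n \<notin> set ys \<Longrightarrow> filter (\<lambda>x. x \<noteq> n) (ex n ys) = ys"
  by (induction ys) auto

lemma ex_adjs: "set (adjs (ex n ys)) =
   (\<lambda>(a,b). (a, hh n b)) ` set (adjs ys) \<union> (if 1 \<in> set ys then {(n,1)} else {})"
proof (induction ys rule: induct_list012)
  case 1 then show ?case by simp
next
  case (2 x) then show ?case by simp
next
  case (3 x y zs)
  show ?case
  proof (cases "y = 1")
    case True
    then show ?thesis using 3(2) by (auto simp: hh_def)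
  next
    case False
    then show ?thesis using 3(2) by (auto simp: hh_def)
  qed
qed

lemma ex_inv: "distinct xs \<Longrightarrow> n \<noteq> 1 \<Longrightarrow> (n \<in> set xs \<longleftrightarrow> (n,1) \<in> set (adjs xs)) \<Longrightarrow>
   (1 \<in> set xs \<longleftrightarrow> (n,1) \<in> set (adjs xs)) \<Longrightarrow> ex n (filter (\<lambda>x. x\<noteq>n) xs) = xs"
proof (induction xs rule: induct_list012)
  case 1 then show ?case by simp
next
  case (2 x) then show ?case by auto
next
  case (3 x y zs)
  show ?case
  proof (cases "x = n")
    case True
    have "y = 1" using 3(3,5) True adjs_subset[of n 1 "y#zs"] by auto
    have zs: "ex n (filter (\<lambda>x. x\<noteq>n) zs) = zs"
      apply (rule 3(1))
      using 3(3,4) True \<open>y=1\<close> adjs_subset[of n 1 zs] by auto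
    show ?thesis using True \<open>y=1\<close> zs 3(4) by simp
  next
    case False
    have x1: "x \<noteq> 1" using 3(3,4,6) False adjs_subset[of n 1 "y#zs"] by auto
    have "ex n (filter (\<lambda>x. x\<noteq>n) (y#zs)) = y#zs"
      apply (rule 3(2))
      using 3(3,4,5,6) False x1 by auto
    then show ?thesis using False x1 by simp
  qed
qed

definition T :: "nat \<Rightarrow> nat list set" where
  "T m = {ys \<in> linear_arrangements m. \<forall>(a,b)\<in>set (adjs ys). b \<noteq> a mod m + 1}"

definition tau :: "nat \<Rightarrow> nat \<Rightarrow> nat \<Rightarrow> nat" where
  "tau m d x = (x - 1 + d) mod m + 1"

definition cls :: "nat \<Rightarrow> nat \<Rightarrow> nat list set" where
  "cls m j = {ys \<in> T m. hd ys = j}"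

lemma tau_range: "0 < m \<Longrightarrow> tau m d x \<in> {1..m}"
  by (simp add: tau_def Suc_leI)

lemma tau_comp: "1 \<le> a \<Longrightarrow> tau m e (tau m d a) = tau m (d+e) a"
  unfolding tau_def by (simp add: mod_add_left_eq add.assoc)

lemma tau_mult: assumes a: "a \<in> {1..m}" shows "tau m (k*m) a = a"
proof -
  have "(a - 1 + k*m) mod m = (a - 1) mod m" by (rule mod_mult_self1)
  also have "\<dots> = a - 1" using a by (intro mod_less) auto
  finally have h: "(a - 1 + k*m) mod m = a - 1" .
  have "(a - 1 + k*m) mod m + 1 = a - 1 + 1" by (simp only: h)
  also have "a - 1 + 1 = a" using a by simp
  finally have "(a - 1 + k*m) mod m + 1 = a" .
  then show ?thesis by (simp only: tau_def)
qed

lemma tau_inj: "0 < m \<Longrightarrow> inj_on (tau m d) {1..m}"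
proof (rule inj_onI)
  fix x y assume m: "0 < m" and x: "x \<in> {1..m}" and y: "y \<in> {1..m}" and e: "tau m d x = tau m d y"
  define e' where "e' = (d+1)*m - d"
  have "d + 1 \<le> (d+1)*m" using m by (cases m) auto
  then have de: "d + e' = (d+1)*m" unfolding e'_def by simp
  have "x = tau m e' (tau m d x)" using x tau_comp[of x m e' d] tau_mult[OF x, of "d+1"] de by simp
  also have "\<dots> = tau m e' (tau m d y)" using e by simp
  also have "\<dots> = y" using y tau_comp[of y m e' d] tau_mult[OF y, of "d+1"] de by simp
  finally show "x = y" .
qed

lemma tau_1: "1 \<le> a \<Longrightarrow> tau m 1 a = a mod m + 1"
  by (simp add: tau_def)

lemma finite_T: "finite (T m)"
proof -
  have "T m \<subseteq> {xs. set xs \<subseteq> {1..m} \<and> length xs \<le> m}"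
    by (auto simp: T_def linear_arrangements_def dest: distinct_card[symmetric])
  then show ?thesis using finite_subset finite_lists_length_le[of "{1..m}" m] by blast
qed

lemma T_map: assumes m: "0 < m" and ys: "ys \<in> T m" shows "map (tau m d) ys \<in> T m"
proof -
  have d: "distinct ys" and s: "set ys = {1..m}" and av: "\<forall>(a,b)\<in>set (adjs ys). b \<noteq> a mod m + 1"
    using ys by (auto simp: T_def linear_arrangements_def)
  have inj: "inj_on (tau m d) {1..m}" using tau_inj[OF m] .
  have "tau m d ` {1..m} = {1..m}"
    by (rule endo_inj_surj) (use tau_range[OF m] inj in auto)
  then have s': "set (map (tau m d) ys) = {1..m}" using s by simp
  have d': "distinct (map (tau m d) ys)" using d inj s by (simp add: distinct_map)
  have "\<forall>(a,b)\<in>set (adjs ys). tau m d b \<noteq> tau m d a mod m + 1"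
  proof (intro ballI, clarify)
    fix a b assume ab: "(a,b) \<in> set (adjs ys)" and eq: "tau m d b = tau m d a mod m + 1"
    have a: "a \<in> {1..m}" and b: "b \<in> {1..m}" using adjs_subset[OF ab] s by auto
    have "tau m d a mod m + 1 = tau m 1 (tau m d a)" using tau_1[of "tau m d a" m] tau_range[OF m] by auto
    also have "\<dots> = tau m (d+1) a" using tau_comp[of a m 1 d] a by simp
    also have "\<dots> = tau m d (tau m 1 a)" using tau_comp[of a m d 1] a by (simp add: add.commute)
    finally have "tau m d b = tau m d (tau m 1 a)" using eq by simp
    then have "b = tau m 1 a" using inj b tau_range[OF m] by (auto dest: inj_onD)
    then have "b = a mod m + 1" using tau_1[of a m] a by simp
    then show False using av ab by auto
  qed
  then have "\<forall>(a',b')\<in>set (adjs (map (tau m d) ys)). b' \<noteq> a' mod m + 1"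
    by (auto simp: adjs_map)
  then show ?thesis using s' d' by (simp add: T_def linear_arrangements_def)
qed

lemma T_nonempty_list: assumes m: "0 < m" and ys: "ys \<in> T m" shows "ys \<noteq> [] \<and> hd ys \<in> {1..m}"
proof -
  have s: "set ys = {1..m}" using ys by (simp add: T_def linear_arrangements_def)
  then have "1 \<in> set ys" using m by simp
  then have ne: "ys \<noteq> []" by auto
  then have "hd ys \<in> set ys" by (rule hd_in_set)
  then show ?thesis using ne s by simp
qed

lemma cls_le: assumes m: "0 < m" and j: "j \<in> {1..m}" and j': "j' \<in> {1..m}"
  shows "card (cls m j) \<le> card (cls m j')"
proof -
  define d where "d = j' + m - j"
  have "j - 1 + d = (j' - 1) + 1 * m" using j j' unfolding d_def by auto
  then have "(j - 1 + d) mod m = (j' - 1) mod m" by (metis mod_mult_self1)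
  then have tj: "tau m d j = j'" using j' unfolding tau_def by auto
  have "inj_on (map (tau m d)) (cls m j)"
  proof (rule inj_onI)
    fix xs ys assume "xs \<in> cls m j" "ys \<in> cls m j" "map (tau m d) xs = map (tau m d) ys"
    then show "xs = ys"
      using tau_inj[OF m, of d]
      by (intro map_inj_on[of "tau m d" xs ys]) (auto simp: cls_def T_def linear_arrangements_def)
  qed
  moreover have "map (tau m d) ` cls m j \<subseteq> cls m j'"
  proof
    fix zs assume "zs \<in> map (tau m d) ` cls m j"
    then obtain ys where ys: "ys \<in> cls m j" and zs: "zs = map (tau m d) ys" by auto
    have "ys \<in> T m" "hd ys = j" using ys by (auto simp: cls_def)
    then show "zs \<in> cls m j'" using T_map[OF m] T_nonempty_list[OF m] tj zs
      by (auto simp: cls_def hd_map)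
  qed
  moreover have "finite (cls m j')" using finite_T by (rule finite_subset[rotated]) (auto simp: cls_def)
  ultimately show ?thesis by (rule card_inj_on_le)
qed

lemma card_T: assumes m: "0 < m" shows "card (T m) = m * card (cls m 1)"
proof -
  have "T m = (\<Union>j\<in>{1..m}. cls m j)"
    using T_nonempty_list[OF m] by (auto simp: cls_def)
  moreover have "card (\<Union>j\<in>{1..m}. cls m j) = (\<Sum>j\<in>{1..m}. card (cls m j))"
  proof (rule card_UN_disjoint)
    show "finite {1..m}" by simp
    show "\<forall>i\<in>{1..m}. finite (cls m i)"
      using finite_T by (auto simp: cls_def)
    show "\<forall>i\<in>{1..m}. \<forall>j\<in>{1..m}. i \<noteq> j \<longrightarrow> cls m i \<inter> cls m j = {}"
      by (auto simp: cls_def)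
  qed
  ultimately have "card (T m) = (\<Sum>j\<in>{1..m}. card (cls m j))" by simp
  also have "\<dots> = (\<Sum>j\<in>{1..m}. card (cls m 1))"
  proof (rule sum.cong[OF refl])
    fix j assume j: "j \<in> {1..m}"
    have one: "(1::nat) \<in> {1..m}" using m by simp
    show "card (cls m j) = card (cls m 1)"
      using cls_le[OF m j one] cls_le[OF m one j] by (rule antisym)
  qed
  finally show ?thesis by simp
qed

theorem corollary4p10:
  fixes n :: nat
  assumes "n \<ge> 2"
  shows "(n - 1) dvd d_n1 n"
proof -
  define m where "m = n - 1"
  have n: "n = m + 1" and m: "0 < m" using assms unfolding m_def by auto
  define S where "S = {xs \<in> linear_arrangements n.
      (\<forall>i. 1 \<le> i \<and> i < n \<longrightarrow> \<not> contains_pattern xs i (i + 1)) \<and> contains_pattern xs n 1}"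
  have "S = ex n ` T m"
  proof
    show "ex n ` T m \<subseteq> S"
    proof
      fix xs assume "xs \<in> ex n ` T m"
      then obtain ys where ys: "ys \<in> T m" and xs: "xs = ex n ys" by auto
      have d: "distinct ys" and s: "set ys = {1..m}" and av: "\<forall>(a,b)\<in>set (adjs ys). b \<noteq> a mod m + 1"
        using ys by (auto simp: T_def linear_arrangements_def)
      have nn: "n \<notin> set ys" using s n by auto
      have one: "1 \<in> set ys" using s m by auto
      have "set xs = {1..n}" using xs ex_set[of n ys] s one n by auto
      moreover have "distinct xs" using xs ex_distinct d nn by auto
      moreover have "contains_pattern xs n 1" using xs one by (simp add: contains_adjs ex_adjs)
      moreover have "\<not> contains_pattern xs i (i + 1)" if i: "1 \<le> i" "i < n" for i
      proof
        assume "contains_pattern xs i (i + 1)"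
        then have "(i, i+1) \<in> (\<lambda>(a,b). (a, hh n b)) ` set (adjs ys)"
          using xs i by (auto simp: contains_adjs ex_adjs split: if_splits)
        then obtain a b where ab: "(a,b) \<in> set (adjs ys)" and e: "i = a" "i + 1 = hh n b" by auto
        have a: "a \<in> {1..m}" and b: "b \<in> {1..m}" using adjs_subset[OF ab] s by auto
        show False
        proof (cases "b = 1")
          case True
          then have "a = m" using e n by (simp add: hh_def)
          then show False using av ab True by auto
        next
          case False
          then have "b = a + 1" "a < m" using e b by (auto simp: hh_def)
          then show False using av ab by auto
        qed
      qed
      ultimately show "xs \<in> S" by (auto simp: S_def linear_arrangements_def)
    qed
  next
    show "S \<subseteq> ex n ` T m"
    proof
      fix xs assume "xs \<in> S"
      then have d: "distinct xs" and s: "set xs = {1..n}" and c: "(n,1) \<in> set (adjs xs)"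
        and av: "\<And>i. 1 \<le> i \<Longrightarrow> i < n \<Longrightarrow> (i, i+1) \<notin> set (adjs xs)"
        by (auto simp: S_def linear_arrangements_def contains_adjs)
      define ys where "ys = filter (\<lambda>x. x \<noteq> n) xs"
      have xs: "xs = ex n ys" unfolding ys_def
        by (rule ex_inv[symmetric]) (use d s c n m in auto)
      have nn: "n \<notin> set ys" unfolding ys_def by simp
      have sy: "set ys = {1..m}" unfolding ys_def using s n by auto
      have dy: "distinct ys" unfolding ys_def using d by simp
      have key: False if ab: "(a,b) \<in> set (adjs ys)" and eq: "b = a mod m + 1" for a b
      proof -
        have a: "a \<in> {1..m}" and b: "b \<in> {1..m}" using adjs_subset[OF ab] sy by auto
        have in_xs: "(a, hh n b) \<in> set (adjs xs)" using ab xs ex_adjs[of n ys] by auto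
        show False
        proof (cases "a = m")
          case True
          then have "b = 1" using eq by simp
          then show False using in_xs av[of a] a True n by (auto simp: hh_def)
        next
          case False
          then have "b = a + 1" using eq a by auto
          then show False using in_xs av[of a] a n by (auto simp: hh_def)
        qed
      qed
      then have "\<forall>(a,b)\<in>set (adjs ys). b \<noteq> a mod m + 1" by auto
      then have "ys \<in> T m" using sy dy by (simp add: T_def linear_arrangements_def)
      then show "xs \<in> ex n ` T m" using xs by auto
    qed
  qed
  moreover have "inj_on (ex n) (T m)"
  proof (rule inj_on_inverseI)
    fix ys assume "ys \<in> T m"
    then have "n \<notin> set ys" using n by (auto simp: T_def linear_arrangements_def)
    then show "filter (\<lambda>x. x \<noteq> n) (ex n ys) = ys" by (rule ex_filter)
  qed
  ultimately have "card S = card (T m)" by (simp add: card_image)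
  then have "d_n1 n = m * card (cls m 1)" using card_T[OF m] by (simp add: d_n1_def S_def)
  then show ?thesis unfolding m_def by simp
qed

end
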